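(* Let $m,\ell\ge 2$. If $\sigma_1\in\mathcal{S}_{m,1}^{1\prec m}(1324)$ and $\sigma_2\in\mathcal{S}_{\ell,k}^{1\prec \ell}(1324)$ for some $k\ge1$, then $\sigma_1\odot\sigma_2\in\mathcal{S}_{n,k+1}^{1\prec n}(1324)$, where $n=\ell+m-1$.
   Context: $\mathcal{S}_n(1324)$ denotes the set of permutations of $\{1,\dots,n\}$ (in one-line notation) avoiding the pattern $1324$. For $a,k\ge1$, $\mathcal{S}_{n,k}^{a\prec n}(1324)$ is the set of $\sigma\in\mathcal{S}_n(1324)$ with $\sigma^{-1}(n)-\sigma^{-1}(a)=k$ and $\sigma^{-1}(b)>\sigma^{-1}(n)$ for all $b\in\{1,\dots,a-1\}$. Elements of $\mathcal{S}_{m,1}^{1\prec m}(1324)$ are called primitives; such a permutation has the form $\sigma_1=\pi_1\,1\,m\,\tau_1$ with words $\pi_1,\tau_1$ (possibly empty). Given a primitive $\sigma_1=\pi_1\,1\,m\,\tau_1$ of size $m$ and a permutation $\sigma_2\in\mathcal{S}_\ell(1324)$ of the form $\sigma_2=\pi_2\,1\,\theta_2\,\ell\,\tau_2$ (words $\pi_2,\theta_2,\tau_2$ possibly empty, so $1$ is to the left of $\ell$), the product is $\sigma_1\odot\sigma_2=\widehat{\pi}_2\,\pi_1\,1\,m\,\widehat{\theta}_2\,n\,\widehat{\tau}_2\,\tau_1$, where $n=\ell+m-1$ and $\widehat{\pi}_2,\widehat{\theta}_2,\widehat{\tau}_2$ are obtained from $\pi_2,\theta_2,\tau_2$ by adding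 $m-1$ to each entry. For example $2143\odot 41253=7214586 3$. *)

theory Defs
  imports Main
begin

definition perm_list :: "nat \<Rightarrow> nat list \<Rightarrow> bool" where
  "perm_list n \<sigma> \<longleftrightarrow> distinct \<sigma> \<and> set \<sigma> = {1..n}"

definition avoids_1324 :: "nat list \<Rightarrow> bool" where
  "avoids_1324 \<sigma> \<longleftrightarrow> \<not> (\<exists>i j k l. i < j \<and> j < k \<and> k < l \<and> l < length \<sigma> \<and>
      \<sigma>!i < \<sigma>!k \<and> \<sigma>!k < \<sigma>!j \<and> \<sigma>!j < \<sigma>!l)"

text \<open>Position (0-based) of an entry; only differences/comparisons of positions are used.\<close>
definition pos :: "nat list \<Rightarrow> nat \<Rightarrow> nat" where
  "pos \<sigma> x = (THE i. i < length \<sigma> \<and> \<sigma>!i = x)"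

definition S_prec :: "nat \<Rightarrow> nat \<Rightarrow> nat \<Rightarrow> nat list set" where
  "S_prec n k a = {\<sigma>. perm_list n \<sigma> \<and> avoids_1324 \<sigma> \<and>
      pos \<sigma> n = pos \<sigma> a + k \<and> (\<forall>b\<in>{1..<a}. pos \<sigma> b > pos \<sigma> n)}"

definition shift :: "nat \<Rightarrow> nat list \<Rightarrow> nat list" where
  "shift c w = map (\<lambda>x. x + c) w"

definition odot :: "nat list \<Rightarrow> nat list \<Rightarrow> nat list" where
  "odot \<sigma>1 \<sigma>2 =
    (let m = length \<sigma>1; l = length \<sigma>2; n = l + m - 1;
         p1 = pos \<sigma>1 1; q1 = pos \<sigma>2 1; ql = pos \<sigma>2 l;
         \<pi>1 = take p1 \<sigma>1; \<tau>1 = drop (p1 + 2) \<sigma>1;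
         \<pi>2 = take q1 \<sigma>2; \<theta>2 = take (ql - q1 - 1) (drop (q1 + 1) \<sigma>2);
         \<tau>2 = drop (ql + 1) \<sigma>2
     in shift (m - 1) \<pi>2 @ \<pi>1 @ [1, m] @ shift (m - 1) \<theta>2 @ [n] @ shift (m - 1) \<tau>2 @ \<tau>1)"

lemma pos_nth: "distinct xs \<Longrightarrow> i < length xs \<Longrightarrow> pos xs (xs!i) = i"
  unfolding pos_def by (rule the_equality) (auto simp: nth_eq_iff_index_eq)

lemma "odot [2,1,4,3] [4,1,2,5,3] = [7,2,1,4,5,8,6,3]"
proof -
  have a: "pos [2,1,4,3] 1 = 1" using pos_nth[of "[2,1,4,3::nat]" 1] by simp
  have b: "pos [4,1,2,5,3] 1 = 1" using pos_nth[of "[4,1,2,5,3::nat]" 1] by simp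
  have c: "pos [4,1,2,5,3] (length [4,1,2,5,3::nat]) = 3" using pos_nth[of "[4,1,2,5,3::nat]" 3] by (simp add: eval_nat_numeral)
  show ?thesis unfolding odot_def Let_def shift_def by (simp only: a b c) simp
qed

end

theory Submission
  imports Defs
begin

lemma filt_idx:
  assumes "Q (xs!i)" "i < length xs"
  shows "filter Q xs ! length (filter Q (take i xs)) = xs!i"
proof -
  have "xs = take i xs @ xs!i # drop (Suc i) xs" using assms(2) by (simp add: id_take_nth_drop)
  then have "filter Q xs = filter Q (take i xs) @ xs!i # filter Q (drop (Suc i) xs)"
    using assms(1) by (metis filter.simps(2) filter_append)
  then show ?thesis by (simp add: nth_append)
qed

lemma filt_mono:
  assumes "Q (xs!i)" "i < j" "j \<le> length xs"
  shows "length (filter Q (take i xs)) < length (filter Q (take j xs))"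
proof -
  have h0: "take j xs = take (Suc i) xs @ drop (Suc i) (take j xs)"
    using assms by (metis append_take_drop_id take_take min.absorb1 Suc_leI)
  have h1: "take (Suc i) xs = take i xs @ [xs!i]" using assms by (simp add: take_Suc_conv_app_nth)
  have "filter Q (take j xs) = filter Q (take i xs) @ [xs!i] @ filter Q (drop (Suc i) (take j xs))"
    apply (subst h0) using assms(1) h1 by simp
  then show ?thesis by simp
qed

lemma filter_pattern:
  assumes av: "avoids_1324 (filter Q xs)" and o: "i<j" "j<k" "k<l" "l<length xs"
    and q: "Q (xs!i)" "Q (xs!j)" "Q (xs!k)" "Q (xs!l)"
    and v: "xs!i < xs!k" "xs!k < xs!j" "xs!j < xs!l"
  shows False
proof -
  define g where "g t = length (filter Q (take t xs))" for t
  have m1: "g i < g j" "g j < g k" "g k < g l" using o q filt_mono[of Q xs] unfolding g_def by auto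
  have "g l < g (length xs)" unfolding g_def by (rule filt_mono) (use o q in auto)
  hence m2: "g l < length (filter Q xs)" unfolding g_def by simp
  have e: "filter Q xs ! g t = xs ! t" if "Q (xs!t)" "t < length xs" for t
    using filt_idx[of Q xs t] that unfolding g_def by simp
  have "filter Q xs ! g i < filter Q xs ! g k \<and> filter Q xs ! g k < filter Q xs ! g j
     \<and> filter Q xs ! g j < filter Q xs ! g l" using e q o v by simp
  then show False using av m1 m2 unfolding avoids_1324_def by blast
qed

lemma filt_distinct:
  "distinct (filter Q xs) \<Longrightarrow> distinct (filter (\<lambda>x. \<not> Q x) xs) \<Longrightarrow> distinct xs"
proof (induction xs)
  case (Cons a xs)
  then show ?case by (cases "Q a") auto
qed simp

lemma avoid_map:
  assumes "avoids_1324 xs" "\<forall>x\<in>set xs. \<forall>y\<in>set xs. x < y \<longleftrightarrow> f x < f y"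
  shows "avoids_1324 (map f xs)"
  unfolding avoids_1324_def
proof (clarsimp)
  fix i j k l assume o: "i < j" "j < k" "k < l" "l < length xs"
    and v: "f (xs ! i) < f (xs ! k)" "f (xs ! k) < f (xs ! j)" "f (xs ! j) < f (xs ! l)"
  have m: "xs!i \<in> set xs" "xs!j \<in> set xs" "xs!k \<in> set xs" "xs!l \<in> set xs" using o by auto
  have "xs!i < xs!k" "xs!k < xs!j" "xs!j < xs!l" using v m assms(2) by blast+
  then show False using assms(1) o unfolding avoids_1324_def by blast
qed


lemma core:
  fixes A B C D E :: "nat list" and m n :: nat
  assumes hA: "\<forall>x\<in>set A. m < x" and hB: "\<forall>x\<in>set B. x < m" and hC: "\<forall>x\<in>set C. m < x"
    and mn: "m < n" and hD: "\<forall>x\<in>set D. m < x" and hE: "\<forall>x\<in>set E. x < m" and m1: "1 < m"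
    and av1: "avoids_1324 (B @ [1,m] @ E)" and av2: "avoids_1324 (A @ [m] @ C @ [n] @ D)"
    and dP: "distinct (A @ B @ [1,m] @ C @ [n] @ D @ E)"
  shows "avoids_1324 (A @ B @ [1,m] @ C @ [n] @ D @ E)"
proof -
  define P where "P = A @ B @ [1,m] @ C @ [n] @ D @ E"
  have f1: "filter (\<lambda>x. x \<le> m) P = B @ [1,m] @ E"
  proof -
    have "filter (\<lambda>x. x \<le> m) A = []" "filter (\<lambda>x. x \<le> m) C = []" "filter (\<lambda>x. x \<le> m) D = []"
      using hA hC hD by (auto simp: filter_empty_conv)
    moreover have "filter (\<lambda>x. x \<le> m) B = B" "filter (\<lambda>x. x \<le> m) E = E"
      using hB hE by (auto simp: filter_id_conv)
    ultimately show ?thesis using mn m1 by (simp add: P_def)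
  qed
  have f2: "filter (\<lambda>x. m \<le> x) P = A @ [m] @ C @ [n] @ D"
  proof -
    have "filter (\<lambda>x. m \<le> x) B = []" "filter (\<lambda>x. m \<le> x) E = []"
      using hB hE by (auto simp: filter_empty_conv)
    moreover have "filter (\<lambda>x. m \<le> x) A = A" "filter (\<lambda>x. m \<le> x) C = C" "filter (\<lambda>x. m \<le> x) D = D"
      using hA hC hD by (auto simp: filter_id_conv)
    ultimately show ?thesis using mn m1 by (simp add: P_def)
  qed
  have av1': "avoids_1324 (filter (\<lambda>x. x \<le> m) P)" using f1 av1 by simp
  have av2': "avoids_1324 (filter (\<lambda>x. m \<le> x) P)" using f2 av2 by simp
  define s where "s = length A + length B + 1"
  define e where "e = s + 1 + length C + 1 + length D"
  have len: "length P = e + length E" unfolding P_def e_def s_def by simp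
  have Ps: "P!s = m" unfolding P_def s_def by (simp add: nth_append)
  have sl: "s < length P" using len unfolding e_def by simp
  have R1: "m < P!i" if "i < length A" for i
    using that hA unfolding P_def by (simp add: nth_append)
  have R2: "P!i < m" if "length A \<le> i" "i < s" for i
  proof -
    have "P!i = (B @ [1]) ! (i - length A)" using that unfolding P_def s_def
      by (simp add: nth_append)
    also have "\<dots> < m" using that hB m1 unfolding s_def
      by (cases "i - length A < length B") (auto simp: nth_append)
    finally show ?thesis .
  qed
  have R3: "m < P!i" if "s < i" "i < e" for i
  proof -
    have Q: "P = (A @ B @ [1,m]) @ ((C @ [n] @ D) @ E)" by (simp add: P_def)
    have "P!i = ((C @ [n] @ D) @ E) ! (i - (s+1))" unfolding Q nth_append[of "A @ B @ [1,m]"] using that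
      by (simp add: s_def)
    also have "\<dots> = (C @ [n] @ D) ! (i - s - 1)" unfolding nth_append[of "C @ [n] @ D"] using that
      by (auto simp: e_def)
    finally have "P!i = (C @ [n] @ D) ! (i - s - 1)" .
    also have "\<dots> > m" using that hC hD mn unfolding s_def e_def
      by (auto simp: nth_append nth_Cons' split: if_splits)
    finally show ?thesis .
  qed
  have R4: "P!i < m" if "e \<le> i" "i < length P" for i
  proof -
    have Q: "P = (A @ B @ [1,m] @ C @ [n] @ D) @ E" by (simp add: P_def)
    have "P!i = E ! (i - e)" unfolding Q nth_append[of "A @ B @ [1,m] @ C @ [n] @ D"] using that
      by (simp add: s_def e_def add.assoc)
    also have "\<dots> < m" using that hE len by simp
    finally show ?thesis .
  qed
  have S1: "s < j" if "i < j" "P!i < m" "m < P!j" for i j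
  proof (rule ccontr)
    assume "\<not> s < j"
    then have "j < s" using Ps that by (cases "j = s") auto
    then have "j < length A" using R2[of j] that(3) by (cases "length A \<le> j") auto
    then have "i < length A" using that(1) by simp
    then show False using R1[of i] that(2) by simp
  qed
  have S3: "P!j < m" if "s < i" "i < j" "j < length P" "P!i < m" for i j
  proof -
    have "e \<le> i" using R3[of i] that by (cases "e \<le> i") auto
    then show ?thesis using R4 that by simp
  qed
  have dd: "i = s" if "P!i = m" "i < length P" for i
  proof -
    have dP': "distinct P" using dP unfolding P_def .
    show ?thesis using nth_eq_iff_index_eq[OF dP' that(2) sl] that(1) Ps by simp
  qed
  show ?thesis unfolding P_def[symmetric] avoids_1324_def
  proof clarify
    fix i j k l assume o: "i < j" "j < k" "k < l" "l < length P"
      and v: "P!i < P!k" "P!k < P!j" "P!j < P!l"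
    show False
    proof (cases "m \<le> P!i")
      case True
      then show False using filter_pattern[OF av2' o] v by simp
    next
      case c1: False
      show False
      proof (cases "P!l \<le> m")
        case True
        then show False using filter_pattern[OF av1' o] v by simp
      next
        case c2: False
        show False
        proof (cases "m < P!j")
          case True
          have sj: "s < j" using S1[of i j] o True c1 by simp
          show False
          proof (cases "m < P!k")
            case True
            then show False using filter_pattern[OF av2', of s j k l] o sj v Ps by simp
          next
            case False
            then have "P!k \<noteq> m" using dd[of k] sj o by auto
            then have "P!k < m" using False by simp
            then show False using S3[of k l] sj o c2 by simp
          qed
        next
          case False
          have "P!j \<noteq> m"
          proof
            assume "P!j = m"
            then have "j = s" using dd o by simp
            then show False using S3[of k l] o v c2 \<open>P!j = m\<close> by simp
          qed
          then have bj: "P!j < m" using False by simp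
          have ks: "k < s"
          proof (rule ccontr)
            assume "\<not> k < s"
            moreover have "k \<noteq> s" using Ps v bj by auto
            ultimately show False using S3[of k l] o v bj c2 by simp
          qed
          show False using filter_pattern[OF av1', of i j k s] o ks v Ps sl bj by simp
        qed
      qed
    qed
  qed
qed


lemma perm_len: "perm_list n \<sigma> \<Longrightarrow> length \<sigma> = n"
  unfolding perm_list_def by (metis card_atLeastAtMost diff_Suc_1 distinct_card)

lemma pos_get:
  assumes "perm_list n \<sigma>" "x \<in> {1..n}"
  shows "pos \<sigma> x < length \<sigma> \<and> \<sigma> ! pos \<sigma> x = x"
proof -
  have "x \<in> set \<sigma>" using assms unfolding perm_list_def by simp
  then obtain i where "i < length \<sigma>" "\<sigma>!i = x" by (metis in_set_conv_nth)
  moreover have "distinct \<sigma>" using assms unfolding perm_list_def by simp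
  ultimately show ?thesis using pos_nth by metis
qed

theorem mainTheorem2:
  fixes m l k :: nat and \<sigma>1 \<sigma>2 :: "nat list"
  assumes "m \<ge> 2" and "l \<ge> 2" and "k \<ge> 1"
    and "\<sigma>1 \<in> S_prec m 1 1"
    and "\<sigma>2 \<in> S_prec l k 1"
  shows "odot \<sigma>1 \<sigma>2 \<in> S_prec (l + m - 1) (k + 1) 1"
proof -
  have p1: "perm_list m \<sigma>1" "avoids_1324 \<sigma>1" "pos \<sigma>1 m = pos \<sigma>1 1 + 1"
    using assms(4) unfolding S_prec_def by auto
  have p2: "perm_list l \<sigma>2" "avoids_1324 \<sigma>2" "pos \<sigma>2 l = pos \<sigma>2 1 + k"
    using assms(5) unfolding S_prec_def by auto
  have L1: "length \<sigma>1 = m" using perm_len p1 by blast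
  have L2: "length \<sigma>2 = l" using perm_len p2 by blast
  define p where "p = pos \<sigma>1 1"
  define q where "q = pos \<sigma>2 1"
  define n where "n = l + m - 1"
  have d1: "distinct \<sigma>1" and s1: "set \<sigma>1 = {1..m}" using p1 unfolding perm_list_def by auto
  have d2: "distinct \<sigma>2" and s2: "set \<sigma>2 = {1..l}" using p2 unfolding perm_list_def by auto
  have a1: "p < m" "\<sigma>1!p = 1" using pos_get[OF p1(1), of 1] assms L1 unfolding p_def by auto
  have a2: "p + 1 < m" "\<sigma>1!(p+1) = m" using pos_get[OF p1(1), of m] assms L1 p1(3) unfolding p_def by auto
  have b1: "q < l" "\<sigma>2!q = 1" using pos_get[OF p2(1), of 1] assms L2 unfolding q_def by auto
  have b2: "q + k < l" "\<sigma>2!(q+k) = l" using pos_get[OF p2(1), of l] assms L2 p2(3) unfolding q_def by auto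
  define \<pi>1 where "\<pi>1 = take p \<sigma>1"
  define \<tau>1 where "\<tau>1 = drop (p + 2) \<sigma>1"
  define \<pi>2 where "\<pi>2 = take q \<sigma>2"
  define \<theta>2 where "\<theta>2 = take (k - 1) (drop (q + 1) \<sigma>2)"
  define \<tau>2 where "\<tau>2 = drop (q + k + 1) \<sigma>2"
  have e1: "\<sigma>1 = \<pi>1 @ [1, m] @ \<tau>1"
  proof -
    have "drop p \<sigma>1 = \<sigma>1!p # \<sigma>1!(Suc p) # drop (Suc (Suc p)) \<sigma>1"
    proof -
      have "drop (Suc p) \<sigma>1 = \<sigma>1!(Suc p) # drop (Suc (Suc p)) \<sigma>1"
        using a2 L1 by (metis Cons_nth_drop_Suc Suc_eq_plus1)
      moreover have "drop p \<sigma>1 = \<sigma>1!p # drop (Suc p) \<sigma>1"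
        using a1 L1 by (metis Cons_nth_drop_Suc)
      ultimately show ?thesis by simp
    qed
    then have dd: "drop p \<sigma>1 = [1, m] @ drop (p + 2) \<sigma>1" using a1 a2 by simp
    have "\<sigma>1 = take p \<sigma>1 @ drop p \<sigma>1" by simp
    also have "\<dots> = \<pi>1 @ [1, m] @ \<tau>1" unfolding dd \<pi>1_def \<tau>1_def ..
    finally show ?thesis .
  qed
  have e2: "\<sigma>2 = \<pi>2 @ [1] @ \<theta>2 @ [l] @ \<tau>2"
  proof -
    have x: "drop q \<sigma>2 = 1 # drop (Suc q) \<sigma>2"
      using b1 L2 by (metis Cons_nth_drop_Suc)
    have "drop (Suc q) \<sigma>2 = take (k - 1) (drop (Suc q) \<sigma>2) @ drop (k - 1) (drop (Suc q) \<sigma>2)"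
      by (rule append_take_drop_id[symmetric])
    moreover have "drop (k - 1) (drop (Suc q) \<sigma>2) = drop (q + k) \<sigma>2"
      using assms(3) by (simp add: add.commute)
    moreover have "drop (q + k) \<sigma>2 = l # drop (Suc (q + k)) \<sigma>2"
      using b2 L2 by (metis Cons_nth_drop_Suc)
    ultimately have "drop q \<sigma>2 = 1 # \<theta>2 @ l # \<tau>2" using x unfolding \<theta>2_def \<tau>2_def by simp
    then have dd: "drop q \<sigma>2 = [1] @ \<theta>2 @ [l] @ \<tau>2" by simp
    have "\<sigma>2 = take q \<sigma>2 @ drop q \<sigma>2" by simp
    also have "\<dots> = \<pi>2 @ [1] @ \<theta>2 @ [l] @ \<tau>2" unfolding dd \<pi>2_def ..
    finally show ?thesis .
  qed
  have lth: "length \<theta>2 = k - 1" unfolding \<theta>2_def using b2 L2 by simp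
  have lpi1: "length \<pi>1 = p" unfolding \<pi>1_def using a1 L1 by simp
  have lpi2: "length \<pi>2 = q" unfolding \<pi>2_def using b1 L2 by simp
  have od: "odot \<sigma>1 \<sigma>2 = shift (m - 1) \<pi>2 @ \<pi>1 @ [1, m] @ shift (m - 1) \<theta>2 @ [n] @ shift (m - 1) \<tau>2 @ \<tau>1"
    unfolding odot_def Let_def L1 L2 using p2(3) 
    by (simp add: p_def q_def \<pi>1_def \<tau>1_def \<pi>2_def \<theta>2_def \<tau>2_def n_def)
  have v1: "\<forall>x\<in>set \<pi>1. 1 < x \<and> x < m" "\<forall>x\<in>set \<tau>1. 1 < x \<and> x < m"
  proof -
    have sub: "set \<pi>1 \<subseteq> {1..m}" "set \<tau>1 \<subseteq> {1..m}" using s1 unfolding e1 by auto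
    have nd: "1 \<notin> set \<pi>1" "m \<notin> set \<pi>1" "1 \<notin> set \<tau>1" "m \<notin> set \<tau>1"
      using d1 unfolding e1 by auto
    show "\<forall>x\<in>set \<pi>1. 1 < x \<and> x < m" "\<forall>x\<in>set \<tau>1. 1 < x \<and> x < m"
      using sub nd by (metis atLeastAtMost_iff le_neq_implies_less subsetD)+
  qed
  have v2: "\<forall>x\<in>set \<pi>2. 1 < x \<and> x \<le> l" "\<forall>x\<in>set \<theta>2. 1 < x \<and> x \<le> l" "\<forall>x\<in>set \<tau>2. 1 < x \<and> x \<le> l"
  proof -
    have sub: "set \<pi>2 \<subseteq> {1..l}" "set \<theta>2 \<subseteq> {1..l}" "set \<tau>2 \<subseteq> {1..l}" using s2 unfolding e2 by auto
    have nd: "1 \<notin> set \<pi>2" "1 \<notin> set \<theta>2" "1 \<notin> set \<tau>2"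
      using d2 unfolding e2 by auto
    show "\<forall>x\<in>set \<pi>2. 1 < x \<and> x \<le> l" "\<forall>x\<in>set \<theta>2. 1 < x \<and> x \<le> l" "\<forall>x\<in>set \<tau>2. 1 < x \<and> x \<le> l"
      using sub nd by (metis atLeastAtMost_iff le_neq_implies_less subsetD)+
  qed
  define f where "f x = (if x = 1 then m else x + (m - 1))" for x
  have fmap: "map f \<sigma>2 = shift (m - 1) \<pi>2 @ [m] @ shift (m - 1) \<theta>2 @ [n] @ shift (m - 1) \<tau>2"
  proof -
    have "map f w = shift (m - 1) w" if "\<forall>x\<in>set w. 1 < x \<and> x \<le> l" for w
      using that unfolding shift_def f_def by auto
    then show ?thesis using v2 e2 assms(1,2) unfolding f_def n_def by simp
  qed
  have fmono: "\<forall>x\<in>set \<sigma>2. \<forall>y\<in>set \<sigma>2. x < y \<longleftrightarrow> f x < f y"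
    using s2 assms(1) unfolding f_def by auto
  have finj: "inj_on f (set \<sigma>2)"
    using s2 assms(1) unfolding f_def inj_on_def by auto
  have av2: "avoids_1324 (shift (m - 1) \<pi>2 @ [m] @ shift (m - 1) \<theta>2 @ [n] @ shift (m - 1) \<tau>2)"
    using avoid_map[OF p2(2) fmono] fmap by simp
  have df: "distinct (shift (m - 1) \<pi>2 @ [m] @ shift (m - 1) \<theta>2 @ [n] @ shift (m - 1) \<tau>2)"
    unfolding fmap[symmetric] distinct_map using d2 finj by simp
  have hs: "\<forall>x\<in>set (shift (m - 1) w). m < x" if "\<forall>x\<in>set w. 1 < x \<and> x \<le> l" for w
    using that assms(1) unfolding shift_def by auto
  define P where "P = shift (m - 1) \<pi>2 @ \<pi>1 @ [1, m] @ shift (m - 1) \<theta>2 @ [n] @ shift (m - 1) \<tau>2 @ \<tau>1"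
  have mn: "m < n" using assms unfolding n_def by simp
  have fl1: "filter (\<lambda>x. x \<le> m) P = \<sigma>1"
  proof -
    have "filter (\<lambda>x. x \<le> m) (shift (m - 1) w) = []" if "\<forall>x\<in>set w. 1 < x \<and> x \<le> l" for w
      using hs[OF that] by (auto simp: filter_empty_conv)
    moreover have "filter (\<lambda>x. x \<le> m) \<pi>1 = \<pi>1" "filter (\<lambda>x. x \<le> m) \<tau>1 = \<tau>1"
      using v1 by (auto simp: filter_id_conv)
    ultimately show ?thesis using v2 mn e1 assms(1) unfolding P_def by simp
  qed
  have fl2: "filter (\<lambda>x. \<not> x \<le> m) P = shift (m - 1) \<pi>2 @ shift (m - 1) \<theta>2 @ [n] @ shift (m - 1) \<tau>2"
  proof -
    have "filter (\<lambda>x. \<not> x \<le> m) (shift (m - 1) w) = shift (m - 1) w" if "\<forall>x\<in>set w. 1 < x \<and> x \<le> l" for w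
      using hs[OF that] by (auto simp: filter_id_conv)
    moreover have "filter (\<lambda>x. \<not> x \<le> m) \<pi>1 = []" "filter (\<lambda>x. \<not> x \<le> m) \<tau>1 = []"
      using v1 by (auto simp: filter_empty_conv)
    ultimately show ?thesis using v2 mn e1 assms(1) unfolding P_def by simp
  qed
  have dP: "distinct P"
    by (rule filt_distinct[of "\<lambda>x. x \<le> m"]) (use fl1 fl2 d1 df in auto)
  have avP: "avoids_1324 P" unfolding P_def
    by (rule core) (use hs v2 v1 mn assms(1) e1 p1(2) av2 dP[unfolded P_def] in auto)
  have setP: "set P = {1..n}"
  proof -
    have "set P = set \<sigma>1 \<union> set (map f \<sigma>2)" unfolding P_def fmap using e1 by auto
    also have "\<dots> = {1..m} \<union> f ` {1..l}" using s1 s2 by simp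
    also have "\<dots> = {1..n}"
    proof
      show "{1..m} \<union> f ` {1..l} \<subseteq> {1..n}" using assms unfolding f_def n_def by auto
      show "{1..n} \<subseteq> {1..m} \<union> f ` {1..l}"
      proof
        fix x assume x: "x \<in> {1..n}"
        show "x \<in> {1..m} \<union> f ` {1..l}"
        proof (cases "x \<le> m")
          case False
          then have "x = f (x - (m - 1))" "x - (m - 1) \<in> {1..l}" using x assms unfolding f_def n_def by auto
          then show ?thesis by blast
        qed (use x in auto)
      qed
    qed
    finally show ?thesis .
  qed
  define r where "r = length (shift (m - 1) \<pi>2) + length \<pi>1"
  have P1: "P ! r = 1" unfolding P_def r_def by (simp add: nth_append)
  have Pn: "P ! (r + 2 + (k - 1)) = n" unfolding P_def r_def
    by (simp add: nth_append lth shift_def)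
  have r1: "r < length P" "r + 2 + (k - 1) < length P" unfolding P_def r_def using lth by (simp_all add: shift_def)
  have pos1: "pos P 1 = r" using pos_nth[OF dP r1(1)] P1 by simp
  have posn: "pos P n = r + 2 + (k - 1)" using pos_nth[OF dP r1(2)] Pn by simp
  have pp: "pos P n = pos P 1 + (k + 1)" using pos1 posn assms(3) by simp
  have "P \<in> S_prec n (k + 1) 1" unfolding S_prec_def perm_list_def
    using dP setP avP pp by simp
  then show ?thesis unfolding od n_def P_def .
qed

end
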